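(* A feasible solution $(\bm\alpha,\bm\beta)\ge0$ of the problem $$\Gamma^*=\max_{\bm\alpha,\bm\beta\ge0}\min_{c}\alpha(c)\min_{d\in\mathcal P_c}\min_{d'\in\mathcal U_c}G_{d,d'}(\beta(c,d),\beta(c,d'))$$ subject to $\sum_c\alpha(c)=1$ and $\sum_{d\in\mathcal D_c}\beta(c,d)=1$, is optimal only if the following holds: there exists $z>0$ such that for all $c\in\mathcal C$, $d\in\mathcal P_c$ and $d'\in\mathcal U_c$, $$\min_{\tilde d\in\mathcal P_c}\alpha(c)G_{\tilde d,d'}(\beta(c,\tilde d),\beta(c,d'))=\min_{\tilde d'\in\mathcal U_c}\alpha(c)G_{d,\tilde d'}(\beta(c,d),\beta(c,\tilde d'))=z.$$
   Context: Setting. - $\mathcal C$ is a finite set of contexts and $\mathcal D=\bigsqcup_c\mathcal D_c$ a finite set of designs. - Design $d$ has true parameter $\theta^*_d=(\mu^*_d,\eta^*_d)\in\Theta=M\times H$ ($M\subseteq\mathbb R$), with distinct $\mu^*_d$. - $\Theta$ is compact; the KL divergence $D(\theta^*\Vert\theta)$ of the parametric family is finite and continuously differentiable in $\theta$. - $\mathcal P_c$ is the set of the $m_c$ designs in $\mathcal D_c$ with largest $\mu^*_d$, and $\mathcal U_c=\mathcal D_c\setminus\mathcal P_c$. Rate function. For $x,y\ge0$, $$G_{d,d'}(x,y)=\inf\{xD(\theta^*_d\Vert\theta_d)+yD(\theta^*_{d'}\Vert\theta_{d'}):\theta_d,\theta_{d'}\in\Theta,\ \mu_{d'}\ge\mu_d\}.$$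 $G_{d,d'}$ is non-decreasing, concave, continuous, and positively homogeneous of degree 1. *)

theory Defs
  imports "HOL-Analysis.Analysis"
begin

text \<open>Parameters are pairs (mu, eta) in real x 'h; mu = fst.
  KL is the KL divergence D(theta1 || theta2) of the parametric family.\<close>

definition rateG ::
  "((real \<times> 'h) \<Rightarrow> (real \<times> 'h) \<Rightarrow> real) \<Rightarrow> (real \<times> 'h) set \<Rightarrow>
   ('d \<Rightarrow> real \<times> 'h) \<Rightarrow> 'd \<Rightarrow> 'd \<Rightarrow> real \<Rightarrow> real \<Rightarrow> real" where
  "rateG KL Theta thstar d d' x y =
     Inf {x * KL (thstar d) th + y * KL (thstar d') th' | th th'.
            th \<in> Theta \<and> th' \<in> Theta \<and> fst th' \<ge> fst th}"

text \<open>P_c: the m_c designs of D_c with largest true mean (means are distinct).\<close>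
definition topset :: "('c \<Rightarrow> 'd set) \<Rightarrow> ('c \<Rightarrow> nat) \<Rightarrow> ('d \<Rightarrow> real) \<Rightarrow> 'c \<Rightarrow> 'd set" where
  "topset Dc m mu c = {d \<in> Dc c. card {d' \<in> Dc c. mu d' > mu d} < m c}"

definition botset :: "('c \<Rightarrow> 'd set) \<Rightarrow> ('c \<Rightarrow> nat) \<Rightarrow> ('d \<Rightarrow> real) \<Rightarrow> 'c \<Rightarrow> 'd set" where
  "botset Dc m mu c = Dc c - topset Dc m mu c"

definition feasible :: "'c set \<Rightarrow> ('c \<Rightarrow> 'd set) \<Rightarrow> ('c \<Rightarrow> real) \<Rightarrow> ('c \<Rightarrow> 'd \<Rightarrow> real) \<Rightarrow> bool" where
  "feasible C Dc \<alpha> \<beta> \<longleftrightarrow>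
     (\<forall>c\<in>C. \<alpha> c \<ge> 0) \<and> (\<forall>c\<in>C. \<forall>d\<in>Dc c. \<beta> c d \<ge> 0) \<and>
     (\<Sum>c\<in>C. \<alpha> c) = 1 \<and> (\<forall>c\<in>C. (\<Sum>d\<in>Dc c. \<beta> c d) = 1)"

definition objective ::
  "((real \<times> 'h) \<Rightarrow> (real \<times> 'h) \<Rightarrow> real) \<Rightarrow> (real \<times> 'h) set \<Rightarrow> ('d \<Rightarrow> real \<times> 'h) \<Rightarrow>
   'c set \<Rightarrow> ('c \<Rightarrow> 'd set) \<Rightarrow> ('c \<Rightarrow> nat) \<Rightarrow> ('c \<Rightarrow> real) \<Rightarrow> ('c \<Rightarrow> 'd \<Rightarrow> real) \<Rightarrow> real" where
  "objective KL Theta thstar C Dc m \<alpha> \<beta> =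
     Min ((\<lambda>c. \<alpha> c * Min ((\<lambda>d. Min ((\<lambda>d'. rateG KL Theta thstar d d' (\<beta> c d) (\<beta> c d'))
              ` botset Dc m (\<lambda>d. fst (thstar d)) c))
              ` topset Dc m (\<lambda>d. fst (thstar d)) c)) ` C)"

end

theory Submission
  imports Defs
begin


definition RS :: "((real \<times> 'h) \<Rightarrow> (real \<times> 'h) \<Rightarrow> real) \<Rightarrow> (real \<times> 'h) set \<Rightarrow>
   ('d \<Rightarrow> real \<times> 'h) \<Rightarrow> 'd \<Rightarrow> 'd \<Rightarrow> real \<Rightarrow> real \<Rightarrow> real set" where
  "RS KL T thstar d d' x y = {x * KL (thstar d) th + y * KL (thstar d') th' | th th'.
            th \<in> T \<and> th' \<in> T \<and> fst th' \<ge> fst th}"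

lemma rateG_RS: "rateG KL T thstar d d' x y = Inf (RS KL T thstar d d' x y)"
  unfolding rateG_def RS_def ..

lemma RS_mem: "th \<in> T \<Longrightarrow> th' \<in> T \<Longrightarrow> fst th \<le> fst th' \<Longrightarrow>
   x * KL (thstar d) th + y * KL (thstar d') th' \<in> RS KL T thstar d d' x y"
  unfolding RS_def by blast

lemma RS_E: "v \<in> RS KL T thstar d d' x y \<Longrightarrow>
   (\<And>th th'. th \<in> T \<Longrightarrow> th' \<in> T \<Longrightarrow> fst th \<le> fst th' \<Longrightarrow>
       v = x * KL (thstar d) th + y * KL (thstar d') th' \<Longrightarrow> P) \<Longrightarrow> P"
  unfolding RS_def by blast

lemma RS_ne: "thstar d \<in> T \<Longrightarrow> RS KL T thstar d d' x y \<noteq> {}"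
  using RS_mem[of "thstar d" T "thstar d" x KL thstar d y d'] by blast

lemma RS_nonneg:
  assumes "\<forall>a\<in>T. \<forall>b\<in>T. KL a b \<ge> 0" "thstar d \<in> T" "thstar d' \<in> T" "x \<ge> 0" "y \<ge> 0"
    and "v \<in> RS KL T thstar d d' x y"
  shows "0 \<le> v"
  using assms(6)
proof (rule RS_E)
  fix th th' assume "th \<in> T" "th' \<in> T" "v = x * KL (thstar d) th + y * KL (thstar d') th'"
  moreover have "KL (thstar d) th \<ge> 0" "KL (thstar d') th' \<ge> 0" using assms(1-3) \<open>th \<in> T\<close> \<open>th' \<in> T\<close> by auto
  ultimately show "0 \<le> v" using assms(4,5) by (metis add_nonneg_nonneg mult_nonneg_nonneg)
qed

lemma rateG_bdd:
  assumes "\<forall>a\<in>T. \<forall>b\<in>T. KL a b \<ge> 0" "thstar d \<in> T" "thstar d' \<in> T" "x \<ge> 0" "y \<ge> 0"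
  shows "bdd_below (RS KL T thstar d d' x y)"
  unfolding bdd_below_def using RS_nonneg[of T KL thstar d d' x y, OF assms] by blast

lemma rateG_le:
  assumes "\<forall>a\<in>T. \<forall>b\<in>T. KL a b \<ge> 0" "thstar d \<in> T" "thstar d' \<in> T" "x \<ge> 0" "y \<ge> 0"
    and "th \<in> T" "th' \<in> T" "fst th \<le> fst th'"
  shows "rateG KL T thstar d d' x y \<le> x * KL (thstar d) th + y * KL (thstar d') th'"
  unfolding rateG_RS
  by (rule cInf_lower[OF RS_mem[of th T th' x KL thstar d y d', OF assms(6-8)] rateG_bdd[of T KL thstar d d' x y, OF assms(1-5)]])

lemma rateG_nonneg:
  assumes "\<forall>a\<in>T. \<forall>b\<in>T. KL a b \<ge> 0" "thstar d \<in> T" "thstar d' \<in> T" "x \<ge> 0" "y \<ge> 0"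
  shows "0 \<le> rateG KL T thstar d d' x y"
  unfolding rateG_RS
  by (rule cInf_greatest[OF RS_ne[of thstar d T KL d' x y, OF assms(2)]]) (rule RS_nonneg[of T KL thstar d d' x y, OF assms])

lemma rateG_zero:
  assumes "\<forall>a\<in>T. \<forall>b\<in>T. KL a b \<ge> 0" "\<forall>a\<in>T. KL a a = 0" "thstar d \<in> T" "thstar d' \<in> T" "x \<ge> 0" "y \<ge> 0"
    and "x = 0 \<or> y = 0"
  shows "rateG KL T thstar d d' x y = 0"
proof -
  have "rateG KL T thstar d d' x y \<le> 0"
  proof (cases "x = 0")
    case True
    then show ?thesis using rateG_le[of T KL thstar d d' x y "thstar d'" "thstar d'", OF assms(1,3,4,5,6) assms(4) assms(4) order_refl] assms by simp
  next
    case False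
    then have "y = 0" using assms by auto
    then show ?thesis using rateG_le[of T KL thstar d d' x y "thstar d" "thstar d", OF assms(1,3,4,5,6) assms(3) assms(3) order_refl] assms by simp
  qed
  with rateG_nonneg[of T KL thstar d d' x y, OF assms(1,3-6)] show ?thesis by simp
qed

lemma rateG_scale_mono:
  assumes "\<forall>a\<in>T. \<forall>b\<in>T. KL a b \<ge> 0" "thstar d \<in> T" "thstar d' \<in> T" "x \<ge> 0" "y \<ge> 0"
    and "s > 0" "s * x \<le> x'" "s * y \<le> y'"
  shows "s * rateG KL T thstar d d' x y \<le> rateG KL T thstar d d' x' y'"
  unfolding rateG_RS[of KL T thstar d d' x' y']
proof (rule cInf_greatest[OF RS_ne[of thstar d T KL d' x' y', OF assms(2)]])
  fix v assume "v \<in> RS KL T thstar d d' x' y'"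
  then show "s * rateG KL T thstar d d' x y \<le> v"
  proof (rule RS_E)
    fix th th' assume th: "th \<in> T" "th' \<in> T" "fst th \<le> fst th'"
      and v: "v = x' * KL (thstar d) th + y' * KL (thstar d') th'"
    have k: "KL (thstar d) th \<ge> 0" "KL (thstar d') th' \<ge> 0" using assms th by auto
    have "s * rateG KL T thstar d d' x y \<le> s * (x * KL (thstar d) th + y * KL (thstar d') th')"
      using rateG_le[of T KL thstar d d' x y th th', OF assms(1-5) th] assms(6) by simp
    also have "\<dots> = (s*x) * KL (thstar d) th + (s*y) * KL (thstar d') th'" by (simp add: algebra_simps)
    also have "\<dots> \<le> v" unfolding v
      by (intro add_mono mult_right_mono) (use assms k in auto)
    finally show ?thesis .
  qed
qed

lemma rateG_pos:
  fixes KL :: "real \<times> 'h::euclidean_space \<Rightarrow> real \<times> 'h \<Rightarrow> real"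
  assumes nn: "\<forall>a\<in>T. \<forall>b\<in>T. KL a b \<ge> 0" and td: "thstar d \<in> T" and td': "thstar d' \<in> T"
    and xy: "x > 0" "y > 0"
    and cpt: "compact T"
    and cont: "\<forall>a\<in>T. continuous_on T (KL a)"
    and zero: "\<forall>a\<in>T. \<forall>b\<in>T. KL a b = 0 \<longrightarrow> fst a = fst b"
    and lt: "fst (thstar d') < fst (thstar d)"
  shows "0 < rateG KL T thstar d d' x y"
proof -
  define S where "S = (T \<times> T) \<inter> {p. fst (fst p) \<le> fst (snd p)}"
  define f where "f = (\<lambda>p. x * KL (thstar d) (fst p) + y * KL (thstar d') (snd p))"
  have set_eq: "RS KL T thstar d d' x y = f ` S"
  proof
    show "RS KL T thstar d d' x y \<subseteq> f ` S"
    proof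
      fix v assume "v \<in> RS KL T thstar d d' x y"
      then show "v \<in> f ` S"
      proof (rule RS_E)
        fix th th' assume "th \<in> T" "th' \<in> T" "fst th \<le> fst th'"
          "v = x * KL (thstar d) th + y * KL (thstar d') th'"
        then show "v \<in> f ` S" unfolding S_def f_def
          by (intro image_eqI[of _ _ "(th, th')"]) auto
      qed
    qed
  next
    show "f ` S \<subseteq> RS KL T thstar d d' x y"
    proof
      fix v assume "v \<in> f ` S"
      then obtain p where "p \<in> S" "v = f p" by blast
      then show "v \<in> RS KL T thstar d d' x y" unfolding S_def f_def
        using RS_mem[of "fst p" T "snd p" x KL thstar d y d'] by auto
    qed
  qed
  have "closed {p :: (real \<times> 'h) \<times> (real \<times> 'h). fst (fst p) \<le> fst (snd p)}"
    by (intro closed_Collect_le continuous_intros)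
  then have cS: "compact S" unfolding S_def using cpt by (intro compact_Int_closed compact_Times)
  have neS: "S \<noteq> {}" unfolding S_def using td by auto
  have c1: "continuous_on S (\<lambda>p. KL (thstar d) (fst p))"
    by (rule continuous_on_compose2[OF cont[rule_format, OF td] continuous_on_fst]) (auto simp: S_def)
  have c2: "continuous_on S (\<lambda>p. KL (thstar d') (snd p))"
    by (rule continuous_on_compose2[OF cont[rule_format, OF td'] continuous_on_snd]) (auto simp: S_def)
  have cf: "continuous_on S f" unfolding f_def
    by (intro continuous_on_add continuous_on_mult_left c1 c2)
  obtain p where p: "p \<in> S" "\<forall>q\<in>S. f p \<le> f q" using continuous_attains_inf[OF cS neS cf] by blast
  have inf: "rateG KL T thstar d d' x y = f p"
    unfolding rateG_RS set_eq by (rule cInf_eq_minimum) (use p in auto)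
  have pT: "fst p \<in> T" "snd p \<in> T" "fst (fst p) \<le> fst (snd p)" using p unfolding S_def by auto
  have k: "KL (thstar d) (fst p) \<ge> 0" "KL (thstar d') (snd p) \<ge> 0" using nn td td' pT by auto
  have t1: "x * KL (thstar d) (fst p) \<ge> 0" "y * KL (thstar d') (snd p) \<ge> 0" using k xy by auto
  have "f p \<noteq> 0"
  proof
    assume "f p = 0"
    then have "x * KL (thstar d) (fst p) = 0" "y * KL (thstar d') (snd p) = 0"
      using t1 unfolding f_def by linarith+
    then have "KL (thstar d) (fst p) = 0" "KL (thstar d') (snd p) = 0" using xy by auto
    then have "fst (thstar d) = fst (fst p)" "fst (thstar d') = fst (snd p)"
      using zero td td' pT by auto
    then show False using pT lt by auto
  qed
  moreover have "f p \<ge> 0" unfolding f_def using t1 by simp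
  ultimately show ?thesis using inf by simp
qed


theorem proposition5:
  fixes C :: "'c set" and Dc :: "'c \<Rightarrow> 'd set" and m :: "'c \<Rightarrow> nat"
    and M :: "real set" and H :: "'h::euclidean_space set"
    and thstar :: "'d \<Rightarrow> real \<times> 'h"
    and KL :: "real \<times> 'h \<Rightarrow> real \<times> 'h \<Rightarrow> real"
    and \<alpha> :: "'c \<Rightarrow> real" and \<beta> :: "'c \<Rightarrow> 'd \<Rightarrow> real"
  assumes finC: "finite C" and neC: "C \<noteq> {}"
    and finD: "\<forall>c\<in>C. finite (Dc c)"
    and disj: "\<forall>c\<in>C. \<forall>c'\<in>C. c \<noteq> c' \<longrightarrow> Dc c \<inter> Dc c' = {}"
    and m_pos: "\<forall>c\<in>C. 0 < m c" and m_lt: "\<forall>c\<in>C. m c < card (Dc c)"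
    and cpt: "compact (M \<times> H)"
    and thstar_in: "\<forall>c\<in>C. \<forall>d\<in>Dc c. thstar d \<in> M \<times> H"
    and distinct_mu: "inj_on (\<lambda>d. fst (thstar d)) (\<Union>c\<in>C. Dc c)"
    and KL_nonneg: "\<forall>th\<in>M \<times> H. \<forall>th'\<in>M \<times> H. KL th th' \<ge> 0"
    and KL_self: "\<forall>th\<in>M \<times> H. KL th th = 0"
    and KL_zero: "\<forall>th\<in>M \<times> H. \<forall>th'\<in>M \<times> H. KL th th' = 0 \<longrightarrow> fst th = fst th'"
    and KL_C1: "\<forall>ths\<in>M \<times> H. \<exists>D'. (\<forall>th\<in>M \<times> H.
                   (KL ths has_derivative blinfun_apply (D' th)) (at th within M \<times> H))
                 \<and> continuous_on (M \<times> H) D'"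
    and feas: "feasible C Dc \<alpha> \<beta>"
    and opt: "\<forall>\<alpha>' \<beta>'. feasible C Dc \<alpha>' \<beta>' \<longrightarrow>
               objective KL (M \<times> H) thstar C Dc m \<alpha>' \<beta>' \<le> objective KL (M \<times> H) thstar C Dc m \<alpha> \<beta>"
  shows "\<exists>z>0. \<forall>c\<in>C.
           \<forall>d\<in>topset Dc m (\<lambda>d. fst (thstar d)) c. \<forall>d'\<in>botset Dc m (\<lambda>d. fst (thstar d)) c.
             Min ((\<lambda>dt. \<alpha> c * rateG KL (M \<times> H) thstar dt d' (\<beta> c dt) (\<beta> c d'))
                    ` topset Dc m (\<lambda>d. fst (thstar d)) c) = z \<and>
             Min ((\<lambda>dt'. \<alpha> c * rateG KL (M \<times> H) thstar d dt' (\<beta> c d) (\<beta> c dt'))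
                    ` botset Dc m (\<lambda>d. fst (thstar d)) c) = z"
proof -
  define Th where "Th = M \<times> H"
  define mu where "mu = (\<lambda>d. fst (thstar d))"
  define P where "P = topset Dc m mu"
  define U where "U = botset Dc m mu"
  define G where "G = rateG KL Th thstar"
  define F where "F = (\<lambda>(b::'c \<Rightarrow> 'd \<Rightarrow> real) c. Min ((\<lambda>d. Min ((\<lambda>d'. G d d' (b c d) (b c d')) ` U c)) ` P c))"
  define obj where "obj = objective KL Th thstar C Dc m"
  have obj_eq: "\<And>a b. obj a b = Min ((\<lambda>c. a c * F b c) ` C)"
    unfolding obj_def objective_def F_def G_def P_def U_def mu_def by simp
  have nn: "\<forall>a\<in>Th. \<forall>b\<in>Th. KL a b \<ge> 0" using KL_nonneg Th_def by simp
  have self: "\<forall>a\<in>Th. KL a a = 0" using KL_self Th_def by simp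
  have zero: "\<forall>a\<in>Th. \<forall>b\<in>Th. KL a b = 0 \<longrightarrow> fst a = fst b" using KL_zero Th_def by simp
  have cTh: "compact Th" using cpt Th_def by simp
  have cont: "\<forall>a\<in>Th. continuous_on Th (KL a)"
  proof
    fix a assume "a \<in> Th"
    then obtain D' where "\<forall>th\<in>Th. (KL a has_derivative blinfun_apply (D' th)) (at th within Th)"
      using KL_C1 Th_def by blast
    then show "continuous_on Th (KL a)" by (intro has_derivative_continuous_on) auto
  qed
  have thT: "\<And>c d. c \<in> C \<Longrightarrow> d \<in> Dc c \<Longrightarrow> thstar d \<in> Th" using thstar_in Th_def by blast
  have PD: "\<And>c. P c \<subseteq> Dc c" unfolding P_def topset_def by auto
  have UD: "\<And>c. U c \<subseteq> Dc c" unfolding U_def botset_def by auto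
  have PU: "\<And>c. Dc c = P c \<union> U c" unfolding U_def botset_def P_def topset_def by auto
  have PUdisj: "\<And>c d. d \<in> P c \<Longrightarrow> d \<notin> U c" unfolding U_def botset_def P_def by auto
  have finP: "\<And>c. c \<in> C \<Longrightarrow> finite (P c)" using finD PD finite_subset by metis
  have finU: "\<And>c. c \<in> C \<Longrightarrow> finite (U c)" using finD UD finite_subset by metis
  have injc: "\<And>c. c \<in> C \<Longrightarrow> inj_on mu (Dc c)"
    using distinct_mu unfolding mu_def by (meson UN_upper inj_on_subset)
  have neD: "\<And>c. c \<in> C \<Longrightarrow> Dc c \<noteq> {}" using m_lt by fastforce
  have neP: "\<And>c. c \<in> C \<Longrightarrow> P c \<noteq> {}"
  proof -
    fix c assume c: "c \<in> C"
    obtain d where d: "d \<in> Dc c" "mu d = Max (mu ` Dc c)"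
      using Max_in[of "mu ` Dc c"] finD c neD by fastforce
    have "\<forall>d'\<in>Dc c. mu d' \<le> mu d" using d finD c by simp
    then have "{d' \<in> Dc c. mu d' > mu d} = {}" by force
    then have "card {d' \<in> Dc c. mu d' > mu d} = 0" by (metis card.empty)
    then have "card {d' \<in> Dc c. mu d' > mu d} < m c" using m_pos c by simp
    then have "d \<in> P c" unfolding P_def topset_def using d(1) by simp
    then show "P c \<noteq> {}" by blast
  qed
  have neU: "\<And>c. c \<in> C \<Longrightarrow> U c \<noteq> {}"
  proof -
    fix c assume c: "c \<in> C"
    obtain d where d: "d \<in> Dc c" "mu d = Min (mu ` Dc c)"
      using Min_in[of "mu ` Dc c"] finD c neD by fastforce
    have le: "\<forall>d'\<in>Dc c. mu d \<le> mu d'" using d finD c by simp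
    have "{d' \<in> Dc c. mu d' > mu d} = Dc c - {d}"
    proof
      show "{d' \<in> Dc c. mu d' > mu d} \<subseteq> Dc c - {d}" by auto
      show "Dc c - {d} \<subseteq> {d' \<in> Dc c. mu d' > mu d}"
      proof
        fix x assume x: "x \<in> Dc c - {d}"
        then have "x \<in> Dc c" "x \<noteq> d" by auto
        then have "mu x \<noteq> mu d" using injc[OF c] d(1) unfolding inj_on_def by blast
        then show "x \<in> {d' \<in> Dc c. mu d' > mu d}" using x le by force
      qed
    qed
    then have "card {d' \<in> Dc c. mu d' > mu d} = card (Dc c) - 1" using d(1) finD c by simp
    moreover have "m c < card (Dc c)" using m_lt c by blast
    ultimately have "\<not> card {d' \<in> Dc c. mu d' > mu d} < m c" by linarith
    then have "d \<in> U c" unfolding U_def botset_def topset_def using d by simp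
    then show "U c \<noteq> {}" by blast
  qed
  have muord: "\<And>c d d'. c \<in> C \<Longrightarrow> d \<in> P c \<Longrightarrow> d' \<in> U c \<Longrightarrow> mu d' < mu d"
  proof (rule ccontr)
    fix c d d' assume c: "c \<in> C" and d: "d \<in> P c" and d': "d' \<in> U c" and nlt: "\<not> mu d' < mu d"
    have dd: "d \<in> Dc c" "d' \<in> Dc c" using d d' PD UD by auto
    have "d \<noteq> d'" using d d' PUdisj by blast
    then have "mu d' \<noteq> mu d" using injc[OF c] dd unfolding inj_on_def by metis
    then have gt: "mu d < mu d'" using nlt by simp
    let ?A = "{x \<in> Dc c. mu x > mu d'}"
    let ?B = "{x \<in> Dc c. mu x > mu d}"
    have "?A \<subset> ?B" using gt dd by auto
    then have "card ?A < card ?B" using finD c by (intro psubset_card_mono) auto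
    moreover have "card ?B < m c" using d unfolding P_def topset_def by simp
    moreover have "d' \<notin> P c" using d' PUdisj by blast
    then have "\<not> card ?A < m c" using dd unfolding P_def topset_def by simp
    ultimately show False by simp
  qed
  have Gnn: "\<And>c d d' x y. c \<in> C \<Longrightarrow> d \<in> Dc c \<Longrightarrow> d' \<in> Dc c \<Longrightarrow> 0 \<le> x \<Longrightarrow> 0 \<le> y \<Longrightarrow> 0 \<le> G d d' x y"
    unfolding G_def using rateG_nonneg nn thT by metis
  have Gz: "\<And>c d d' x y. c \<in> C \<Longrightarrow> d \<in> Dc c \<Longrightarrow> d' \<in> Dc c \<Longrightarrow> 0 \<le> x \<Longrightarrow> 0 \<le> y \<Longrightarrow> x = 0 \<or> y = 0 \<Longrightarrow> G d d' x y = 0"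
    unfolding G_def using rateG_zero nn self thT by metis
  have Gsc: "\<And>c d d' x y s x' y'. c \<in> C \<Longrightarrow> d \<in> Dc c \<Longrightarrow> d' \<in> Dc c \<Longrightarrow> 0 \<le> x \<Longrightarrow> 0 \<le> y \<Longrightarrow>
      0 < s \<Longrightarrow> s * x \<le> x' \<Longrightarrow> s * y \<le> y' \<Longrightarrow> s * G d d' x y \<le> G d d' x' y'"
    unfolding G_def using rateG_scale_mono nn thT by metis
  have Gpos: "\<And>c d d' x y. c \<in> C \<Longrightarrow> d \<in> P c \<Longrightarrow> d' \<in> U c \<Longrightarrow> 0 < x \<Longrightarrow> 0 < y \<Longrightarrow> 0 < G d d' x y"
  proof -
    fix c d d' and x y :: real assume c: "c \<in> C" and d: "d \<in> P c" and d': "d' \<in> U c" and xy: "0 < x" "0 < y"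
    have "d \<in> Dc c" "d' \<in> Dc c" using d d' PD UD by blast+
    then have dd: "thstar d \<in> Th" "thstar d' \<in> Th" using thT[OF c] by blast+
    have "fst (thstar d') < fst (thstar d)" using muord[OF c d d'] unfolding mu_def .
    then show "0 < G d d' x y" unfolding G_def
      using rateG_pos[of Th KL thstar d d' x y, OF nn dd xy cTh cont zero] by simp
  qed
  have Fle: "\<And>b c d d'. c \<in> C \<Longrightarrow> d \<in> P c \<Longrightarrow> d' \<in> U c \<Longrightarrow> F b c \<le> G d d' (b c d) (b c d')"
  proof -
    fix b c d d' assume c: "c \<in> C" and d: "d \<in> P c" and d': "d' \<in> U c"
    have "F b c \<le> Min ((\<lambda>d'. G d d' (b c d) (b c d')) ` U c)"
      unfolding F_def by (rule Min_le) (use finP[OF c] d in auto)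
    also have "\<dots> \<le> G d d' (b c d) (b c d')"
      by (rule Min_le) (use finU[OF c] d' in auto)
    finally show "F b c \<le> G d d' (b c d) (b c d')" .
  qed
  have Fgt: "\<And>b c r. c \<in> C \<Longrightarrow> r < F b c \<longleftrightarrow> (\<forall>d\<in>P c. \<forall>d'\<in>U c. r < G d d' (b c d) (b c d'))"
    unfolding F_def using finP finU neP neU by simp
  have objgt: "\<And>a b r. r < obj a b \<longleftrightarrow> (\<forall>c\<in>C. r < a c * F b c)"
    unfolding obj_eq using finC neC by simp
  have objle: "\<And>a b c. c \<in> C \<Longrightarrow> obj a b \<le> a c * F b c"
    unfolding obj_eq using finC by simp
  have fa: "\<forall>c\<in>C. \<alpha> c \<ge> 0" "\<forall>c\<in>C. \<forall>d\<in>Dc c. \<beta> c d \<ge> 0" "(\<Sum>c\<in>C. \<alpha> c) = 1"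
    "\<forall>c\<in>C. (\<Sum>d\<in>Dc c. \<beta> c d) = 1" using feas unfolding feasible_def by auto
  define \<Gamma> where "\<Gamma> = obj \<alpha> \<beta>"
  have opt': "\<And>a b. feasible C Dc a b \<Longrightarrow> obj a b \<le> \<Gamma>"
    using opt unfolding \<Gamma>_def obj_def Th_def by blast
  define a0 where "a0 = (\<lambda>c::'c. 1 / real (card C))"
  define b0 where "b0 = (\<lambda>(c::'c) (d::'d). 1 / real (card (Dc c)))"
  have cardC: "card C > 0" using finC neC card_gt_0_iff by blast
  have cardD: "\<And>c. c \<in> C \<Longrightarrow> card (Dc c) > 0" using m_lt by fastforce
  have feas0: "feasible C Dc a0 b0" unfolding feasible_def a0_def b0_def using cardC cardD by auto
  have "\<forall>c\<in>C. 0 < a0 c * F b0 c"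
  proof
    fix c assume c: "c \<in> C"
    have "0 < F b0 c" unfolding Fgt[OF c] b0_def
      using Gpos[OF c] cardD[OF c] by simp
    moreover have "0 < a0 c" unfolding a0_def using cardC by simp
    ultimately show "0 < a0 c * F b0 c" by simp
  qed
  then have "0 < obj a0 b0" using objgt by blast
  then have \<Gamma>pos: "0 < \<Gamma>" using opt'[OF feas0] by simp
  have h\<Gamma>: "\<And>c. c \<in> C \<Longrightarrow> \<Gamma> \<le> \<alpha> c * F \<beta> c" unfolding \<Gamma>_def by (rule objle)
  have \<alpha>pos: "\<And>c. c \<in> C \<Longrightarrow> 0 < \<alpha> c" and Fpos: "\<And>c. c \<in> C \<Longrightarrow> 0 < F \<beta> c"
  proof -
    fix c assume c: "c \<in> C"
    have "0 < \<alpha> c * F \<beta> c" using h\<Gamma>[OF c] \<Gamma>pos by simp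
    then show "0 < \<alpha> c" "0 < F \<beta> c" using fa(1) c by (auto simp: zero_less_mult_iff)
  qed
  \<comment> \<open>Lemma S: shifting weight between contexts\<close>
  have lemS: False if b: "feasible C Dc \<alpha> b" and all: "\<forall>c\<in>C. \<Gamma> \<le> \<alpha> c * F b c"
    and c0: "c0 \<in> C" and gt: "\<Gamma> < \<alpha> c0 * F b c0" for b c0
  proof -
    have a0nn: "\<alpha> c0 \<ge> 0" using fa(1) c0 by blast
    have a0le: "\<alpha> c0 \<le> 1" using fa(3) member_le_sum[of c0 C \<alpha>] fa(1) c0 finC by auto
    have "0 < \<alpha> c0 * F b c0" using gt \<Gamma>pos by simp
    then have Fb0: "F b c0 > 0" using a0nn by (auto simp: zero_less_mult_iff)
    define diff where "diff = \<alpha> c0 * F b c0 - \<Gamma>"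
    have diffpos: "diff > 0" using gt diff_def by simp
    define \<delta> where "\<delta> = diff / (2 * (F b c0 + 1))"
    have \<delta>pos: "\<delta> > 0" unfolding \<delta>_def using diffpos Fb0 by simp
    have "\<delta> * (F b c0 + 1) = diff / 2" unfolding \<delta>_def using Fb0 by (simp add: field_simps)
    then have key: "\<delta> * F b c0 < diff" using \<delta>pos diffpos by (simp add: algebra_simps)
    define \<alpha>' where "\<alpha>' = (\<lambda>c. if c = c0 then \<alpha> c0 - \<delta> * (1 - \<alpha> c0) else (1 + \<delta>) * \<alpha> c)"
    have "\<delta> * (1 - \<alpha> c0) * F b c0 \<le> \<delta> * F b c0"
      using \<delta>pos Fb0 a0nn by (simp add: mult_left_le mult_le_cancel_right1 algebra_simps)
    then have c0val: "\<Gamma> < \<alpha>' c0 * F b c0" unfolding \<alpha>'_def using key diff_def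
      by (simp add: algebra_simps)
    have a'c0: "0 < \<alpha>' c0"
    proof -
      have "0 < \<alpha>' c0 * F b c0" using c0val \<Gamma>pos by simp
      then show ?thesis using Fb0 by (simp add: zero_less_mult_iff)
    qed
    have sumrest: "(\<Sum>c\<in>C - {c0}. \<alpha> c) = 1 - \<alpha> c0"
      using sum.remove[OF finC c0, of \<alpha>] fa(3) by simp
    have "(\<Sum>c\<in>C. \<alpha>' c) = \<alpha>' c0 + (\<Sum>c\<in>C - {c0}. \<alpha>' c)"
      using sum.remove[OF finC c0] by simp
    also have "(\<Sum>c\<in>C - {c0}. \<alpha>' c) = (\<Sum>c\<in>C - {c0}. (1 + \<delta>) * \<alpha> c)"
      by (rule sum.cong) (auto simp: \<alpha>'_def)
    also have "\<dots> = (1 + \<delta>) * (1 - \<alpha> c0)" by (simp add: sum_distrib_left[symmetric] sumrest)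
    finally have "(\<Sum>c\<in>C. \<alpha>' c) = 1" unfolding \<alpha>'_def by (simp add: algebra_simps)
    moreover have "\<forall>c\<in>C. \<alpha>' c \<ge> 0"
      using a'c0 fa(1) \<delta>pos unfolding \<alpha>'_def by (auto intro: mult_nonneg_nonneg)
    ultimately have feas': "feasible C Dc \<alpha>' b" using b unfolding feasible_def by blast
    have "\<forall>c\<in>C. \<Gamma> < \<alpha>' c * F b c"
    proof
      fix c assume c: "c \<in> C"
      show "\<Gamma> < \<alpha>' c * F b c"
      proof (cases "c = c0")
        case True then show ?thesis using c0val by simp
      next
        case False
        have "\<Gamma> \<le> \<alpha> c * F b c" using all c by blast
        then have "0 < \<alpha> c * F b c" using \<Gamma>pos by simp
        then have "\<alpha> c * F b c < (1 + \<delta>) * (\<alpha> c * F b c)"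
          using \<delta>pos mult_pos_pos[of \<delta> "\<alpha> c * F b c"] by (simp add: algebra_simps)
        then show ?thesis using \<open>\<Gamma> \<le> \<alpha> c * F b c\<close> False unfolding \<alpha>'_def by simp
      qed
    qed
    then have "\<Gamma> < obj \<alpha>' b" using objgt by blast
    then show False using opt'[OF feas'] by simp
  qed
  have claim1: "\<And>c. c \<in> C \<Longrightarrow> \<alpha> c * F \<beta> c = \<Gamma>"
  proof (rule ccontr)
    fix c assume c: "c \<in> C" and ne: "\<alpha> c * F \<beta> c \<noteq> \<Gamma>"
    then have "\<Gamma> < \<alpha> c * F \<beta> c" using h\<Gamma>[OF c] by simp
    then show False using lemS[OF feas _ c] h\<Gamma> by blast
  qed
  have \<beta>nn: "\<And>c d. c \<in> C \<Longrightarrow> d \<in> Dc c \<Longrightarrow> 0 \<le> \<beta> c d" using fa(2) by blast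
  \<comment> \<open>Lemma B: rebalancing within a context\<close>
  have lemB: False if c0: "c0 \<in> C" and e: "e \<in> Dc c0"
    and ex: "\<exists>d\<in>P c0. \<exists>d'\<in>U c0. d = e \<or> d' = e"
    and hyp: "\<forall>d\<in>P c0. \<forall>d'\<in>U c0. (d = e \<or> d' = e) \<longrightarrow> F \<beta> c0 < G d d' (\<beta> c0 d) (\<beta> c0 d')" for c0 e
  proof -
    define Fv where "Fv = F \<beta> c0"
    have Fv: "0 < Fv" using Fpos[OF c0] Fv_def by simp
    define E where "E = {p \<in> P c0 \<times> U c0. fst p = e \<or> snd p = e}"
    have finE: "finite E" unfolding E_def using finP[OF c0] finU[OF c0]
      by simp
    have neE: "E \<noteq> {}" unfolding E_def using ex by auto
    define g where "g = (\<lambda>p. G (fst p) (snd p) (\<beta> c0 (fst p)) (\<beta> c0 (snd p)))"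
    define m0 where "m0 = Min (g ` E)"
    have m0gt: "Fv < m0" unfolding m0_def Fv_def using finE neE hyp unfolding E_def g_def by auto
    have m0le: "m0 \<le> G d d' (\<beta> c0 d) (\<beta> c0 d')"
      if "d \<in> P c0" "d' \<in> U c0" "d = e \<or> d' = e" for d d'
    proof -
      have "(d, d') \<in> E" unfolding E_def using that by auto
      then show ?thesis unfolding m0_def using finE g_def by (metis Min_le finite_imageI fst_conv image_eqI snd_conv)
    qed
    have \<beta>epos: "0 < \<beta> c0 e"
    proof -
      obtain d d' where dd: "d \<in> P c0" "d' \<in> U c0" "d = e \<or> d' = e" using ex by blast
      have dD: "d \<in> Dc c0" "d' \<in> Dc c0" using dd PD UD by auto
      have "0 < G d d' (\<beta> c0 d) (\<beta> c0 d')" using hyp dd Fv Fv_def by force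
      then have "\<beta> c0 d \<noteq> 0" "\<beta> c0 d' \<noteq> 0" using Gz[OF c0 dD] \<beta>nn[OF c0] dD by force+
      then have "\<beta> c0 e \<noteq> 0" using dd by auto
      then show ?thesis using \<beta>nn[OF c0 e] by simp
    qed
    have \<beta>ele: "\<beta> c0 e \<le> 1"
      using fa(4) c0 member_le_sum[of e "Dc c0" "\<beta> c0"] e \<beta>nn[OF c0] finD c0 by auto
    define \<epsilon> where "\<epsilon> = (m0 - Fv) / (2 * m0)"
    have m0pos: "0 < m0" using Fv m0gt by simp
    have \<epsilon>pos: "0 < \<epsilon>" unfolding \<epsilon>_def using m0gt m0pos by simp
    have \<epsilon>lt: "\<epsilon> < 1" unfolding \<epsilon>_def using m0gt m0pos Fv by (simp add: field_simps)
    have \<epsilon>key: "Fv < (1 - \<epsilon>) * m0" unfolding \<epsilon>_def using m0gt m0pos by (simp add: field_simps)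
    have pe: "0 < \<epsilon> * \<beta> c0 e" "\<epsilon> * \<beta> c0 e < 1"
    proof -
      show "0 < \<epsilon> * \<beta> c0 e" using \<epsilon>pos \<beta>epos by simp
      have "\<epsilon> * \<beta> c0 e \<le> \<epsilon> * 1" using \<beta>ele \<epsilon>pos by (intro mult_left_mono) auto
      then show "\<epsilon> * \<beta> c0 e < 1" using \<epsilon>lt by linarith
    qed
    define t where "t = 1 / (1 - \<epsilon> * \<beta> c0 e)"
    have t1: "1 < t" unfolding t_def using pe by simp
    have tinv: "t * (1 - \<epsilon> * \<beta> c0 e) = 1" unfolding t_def using pe by simp
    define bc where "bc = (\<lambda>d. (if d = e then (1 - \<epsilon>) * \<beta> c0 e else \<beta> c0 d) * t)"
    define b where "b = \<beta>(c0 := bc)"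
    have bc_nn: "\<And>d. d \<in> Dc c0 \<Longrightarrow> 0 \<le> bc d"
      unfolding bc_def using \<beta>nn[OF c0] \<epsilon>lt t1 by auto
    have bc_lb: "\<And>d. d \<in> Dc c0 \<Longrightarrow> (1 - \<epsilon>) * \<beta> c0 d \<le> bc d"
    proof -
      fix d assume d: "d \<in> Dc c0"
      have X: "0 \<le> (1 - \<epsilon>) * \<beta> c0 d" using \<beta>nn[OF c0 d] \<epsilon>lt by simp
      have "(1 - \<epsilon>) * \<beta> c0 d * 1 \<le> (1 - \<epsilon>) * \<beta> c0 d * t"
        using X t1 by (intro mult_left_mono) auto
      moreover have "\<beta> c0 d * 1 \<le> \<beta> c0 d * t"
        using \<beta>nn[OF c0 d] t1 by (intro mult_left_mono) auto
      moreover have "(1 - \<epsilon>) * \<beta> c0 d \<le> 1 * \<beta> c0 d"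
        using \<beta>nn[OF c0 d] \<epsilon>pos by (intro mult_right_mono) auto
      ultimately have "(1 - \<epsilon>) * \<beta> c0 d \<le> (1 - \<epsilon>) * \<beta> c0 d * t"
        "(1 - \<epsilon>) * \<beta> c0 d \<le> \<beta> c0 d * t" by simp_all
      then show "(1 - \<epsilon>) * \<beta> c0 d \<le> bc d" unfolding bc_def by auto
    qed
    have sumrest: "(\<Sum>d\<in>Dc c0 - {e}. \<beta> c0 d) = 1 - \<beta> c0 e"
      using sum.remove[OF finD[rule_format, OF c0] e, of "\<beta> c0"] fa(4) c0 by simp
    have "(\<Sum>d\<in>Dc c0. bc d) = bc e + (\<Sum>d\<in>Dc c0 - {e}. bc d)"
      using sum.remove[OF finD[rule_format, OF c0] e] by simp
    also have "(\<Sum>d\<in>Dc c0 - {e}. bc d) = (\<Sum>d\<in>Dc c0 - {e}. \<beta> c0 d * t)"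
      by (rule sum.cong) (auto simp: bc_def)
    also have "\<dots> = (1 - \<beta> c0 e) * t" by (simp add: sum_distrib_right[symmetric] sumrest)
    finally have "(\<Sum>d\<in>Dc c0. bc d) = t * (1 - \<epsilon> * \<beta> c0 e)" unfolding bc_def by (simp add: algebra_simps)
    then have sumbc: "(\<Sum>d\<in>Dc c0. bc d) = 1" using tinv by simp
    have feasb: "feasible C Dc \<alpha> b"
      using feas sumbc bc_nn unfolding feasible_def b_def by auto
    have "Fv < F b c0"
      unfolding Fgt[OF c0]
    proof (intro ballI)
      fix d d' assume d: "d \<in> P c0" and d': "d' \<in> U c0"
      have dD: "d \<in> Dc c0" "d' \<in> Dc c0" using d d' PD UD by auto
      have bb: "b c0 = bc" unfolding b_def by simp
      show "Fv < G d d' (b c0 d) (b c0 d')"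
      proof (cases "d = e \<or> d' = e")
        case True
        have "Fv < (1 - \<epsilon>) * m0" by (rule \<epsilon>key)
        also have "\<dots> \<le> (1 - \<epsilon>) * G d d' (\<beta> c0 d) (\<beta> c0 d')"
          using m0le[OF d d' True] \<epsilon>lt by simp
        also have "\<dots> \<le> G d d' (bc d) (bc d')"
          by (rule Gsc[OF c0 dD \<beta>nn[OF c0 dD(1)] \<beta>nn[OF c0 dD(2)]]) (use \<epsilon>lt bc_lb dD in auto)
        finally show ?thesis using bb by simp
      next
        case False
        have bcv: "bc d = t * \<beta> c0 d" "bc d' = t * \<beta> c0 d'" unfolding bc_def using False by auto
        have "Fv \<le> G d d' (\<beta> c0 d) (\<beta> c0 d')" unfolding Fv_def by (rule Fle[OF c0 d d'])
        moreover have "G d d' (\<beta> c0 d) (\<beta> c0 d') < t * G d d' (\<beta> c0 d) (\<beta> c0 d')"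
          using calculation Fv t1 by simp
        moreover have "t * G d d' (\<beta> c0 d) (\<beta> c0 d') \<le> G d d' (bc d) (bc d')"
          by (rule Gsc[OF c0 dD \<beta>nn[OF c0 dD(1)] \<beta>nn[OF c0 dD(2)]]) (use t1 bcv in auto)
        ultimately show ?thesis using bb by simp
      qed
    qed
    then have "\<alpha> c0 * F \<beta> c0 < \<alpha> c0 * F b c0" using \<alpha>pos[OF c0] Fv_def by simp
    then have gt: "\<Gamma> < \<alpha> c0 * F b c0" using claim1[OF c0] by simp
    have "\<forall>c\<in>C. \<Gamma> \<le> \<alpha> c * F b c"
    proof
      fix c assume c: "c \<in> C"
      show "\<Gamma> \<le> \<alpha> c * F b c"
      proof (cases "c = c0")
        case True then show ?thesis using gt by simp
      next
        case False
        then have "F b c = F \<beta> c" unfolding F_def b_def by simp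
        then show ?thesis using h\<Gamma>[OF c] by simp
      qed
    qed
    then show False using lemS[OF feasb _ c0 gt] by blast
  qed
  have fin1: "Min ((\<lambda>d'. \<alpha> c * G d d' (\<beta> c d) (\<beta> c d')) ` U c) = \<Gamma>"
    if c: "c \<in> C" and d: "d \<in> P c" for c d
  proof -
    have ge: "\<forall>d'\<in>U c. \<Gamma> \<le> \<alpha> c * G d d' (\<beta> c d) (\<beta> c d')"
      using claim1[OF c] Fle[OF c d] fa(1) c by (metis mult_left_mono)
    have ex: "\<exists>d'\<in>U c. \<alpha> c * G d d' (\<beta> c d) (\<beta> c d') \<le> \<Gamma>"
    proof (rule ccontr)
      assume "\<not> ?thesis"
      then have "\<forall>d'\<in>U c. \<alpha> c * F \<beta> c < \<alpha> c * G d d' (\<beta> c d) (\<beta> c d')"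
        using claim1[OF c] by auto
      then have A: "\<forall>d'\<in>U c. F \<beta> c < G d d' (\<beta> c d) (\<beta> c d')"
        using \<alpha>pos[OF c] by (simp add: mult_less_cancel_left_pos)
      show False
      proof (rule lemB[OF c])
        show "d \<in> Dc c" using d PD by auto
        show "\<exists>d2\<in>P c. \<exists>d'\<in>U c. d2 = d \<or> d' = d" using d neU[OF c] by blast
        show "\<forall>d2\<in>P c. \<forall>d'\<in>U c. (d2 = d \<or> d' = d) \<longrightarrow> F \<beta> c < G d2 d' (\<beta> c d2) (\<beta> c d')"
          using A d PUdisj by blast
      qed
    qed
    show ?thesis
      using ge ex finU[OF c] neU[OF c] by (intro antisym) (simp_all add: Min_le_iff)
  qed
  have fin2: "Min ((\<lambda>d. \<alpha> c * G d d' (\<beta> c d) (\<beta> c d')) ` P c) = \<Gamma>"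
    if c: "c \<in> C" and d': "d' \<in> U c" for c d'
  proof -
    have ge: "\<forall>d\<in>P c. \<Gamma> \<le> \<alpha> c * G d d' (\<beta> c d) (\<beta> c d')"
      using claim1[OF c] Fle[OF c _ d'] fa(1) c by (metis mult_left_mono)
    have ex: "\<exists>d\<in>P c. \<alpha> c * G d d' (\<beta> c d) (\<beta> c d') \<le> \<Gamma>"
    proof (rule ccontr)
      assume "\<not> ?thesis"
      then have "\<forall>d\<in>P c. \<alpha> c * F \<beta> c < \<alpha> c * G d d' (\<beta> c d) (\<beta> c d')"
        using claim1[OF c] by auto
      then have A: "\<forall>d\<in>P c. F \<beta> c < G d d' (\<beta> c d) (\<beta> c d')"
        using \<alpha>pos[OF c] by (simp add: mult_less_cancel_left_pos)
      show False
      proof (rule lemB[OF c])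
        show "d' \<in> Dc c" using d' UD by auto
        show "\<exists>d2\<in>P c. \<exists>d3\<in>U c. d2 = d' \<or> d3 = d'" using d' neP[OF c] by blast
        show "\<forall>d2\<in>P c. \<forall>d3\<in>U c. (d2 = d' \<or> d3 = d') \<longrightarrow> F \<beta> c < G d2 d3 (\<beta> c d2) (\<beta> c d3)"
          using A d' PUdisj by blast
      qed
    qed
    show ?thesis
      using ge ex finP[OF c] neP[OF c] by (intro antisym) (simp_all add: Min_le_iff)
  qed
  have final: "\<forall>c\<in>C. \<forall>d\<in>P c. \<forall>d'\<in>U c.
      Min ((\<lambda>dt. \<alpha> c * G dt d' (\<beta> c dt) (\<beta> c d')) ` P c) = \<Gamma> \<and>
      Min ((\<lambda>dt'. \<alpha> c * G d dt' (\<beta> c d) (\<beta> c dt')) ` U c) = \<Gamma>"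
    using fin1 fin2 by blast
  show ?thesis
    using final \<Gamma>pos unfolding P_def U_def G_def mu_def Th_def by blast
qed

end
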